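(* Let $X$ be a Banach space. If there exists a Banach space $Y\neq\{0\}$ such that the pair $(X,Y)$ has the uniform sBPBp, then $X$ is uniformly convex.
   Context: All Banach spaces are over $\mathbb{K}=\mathbb{R}$ or $\mathbb{C}$. $S_X$ denotes the unit sphere of $X$ and $\mathcal{L}(X,Y)$ the space of bounded linear operators from $X$ to $Y$ with the operator norm. A pair of Banach spaces $(X,Y)$ has the uniform strong Bishop–Phelps–Bollobás property (uniform sBPBp) if for every $\varepsilon>0$ there exists $\eta(\varepsilon)>0$ such that whenever $T\in\mathcal{L}(X,Y)$ with $\|T\|=1$ and $x_0\in S_X$ satisfy $\|T(x_0)\|>1-\eta(\varepsilon)$, there exists $x_1\in S_X$ with $\|T(x_1)\|=1$ and $\|x_1-x_0\|<\varepsilon$. *)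

theory Defs
  imports "HOL-Analysis.Analysis"
begin

text \<open>The class L
  encodes the scalar field: for K = R it is all bounded (real-)linear maps, for
  K = C it is the bounded maps that are complex-linear w.r.t. given complex structures.\<close>
definition uniform_sBPBp :: "(('a::real_normed_vector) \<Rightarrow> ('b::real_normed_vector)) set \<Rightarrow> bool" where
  "uniform_sBPBp L \<longleftrightarrow>
     (\<forall>\<epsilon>>0. \<exists>\<eta>>0. \<forall>T\<in>L. \<forall>x0.
        onorm T = 1 \<and> norm x0 = 1 \<and> norm (T x0) > 1 - \<eta> \<longrightarrow>
        (\<exists>x1. norm x1 = 1 \<and> norm (T x1) = 1 \<and> norm (x1 - x0) < \<epsilon>))"

text \<open>A complex structure on a real normed space: multiplication by i, compatible with the
  norm, so that (a + i b) x := a x + b J x makes the space a complex normed space.\<close>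
definition complex_structure :: "('a::real_normed_vector \<Rightarrow> 'a) \<Rightarrow> bool" where
  "complex_structure J \<longleftrightarrow> linear J \<and> (\<forall>x. J (J x) = - x) \<and>
     (\<forall>a b x. norm (a *\<^sub>R x + b *\<^sub>R J x) = sqrt (a\<^sup>2 + b\<^sup>2) * norm x)"

definition real_operators :: "(('a::real_normed_vector) \<Rightarrow> ('b::real_normed_vector)) set" where
  "real_operators = {T. bounded_linear T}"

definition complex_operators ::
  "('a::real_normed_vector \<Rightarrow> 'a) \<Rightarrow> ('b::real_normed_vector \<Rightarrow> 'b) \<Rightarrow> ('a \<Rightarrow> 'b) set" where
  "complex_operators JX JY = {T. bounded_linear T \<and> (\<forall>x. T (JX x) = JY (T x))}"

text \<open>Uniform convexity (definition independent of the scalar field).\<close>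
definition uniformly_convex :: "'a::real_normed_vector itself \<Rightarrow> bool" where
  "uniformly_convex _ \<longleftrightarrow>
     (\<forall>\<epsilon>>0. \<exists>\<delta>>0. \<forall>x y::'a. norm x = 1 \<and> norm y = 1 \<and> norm (x - y) \<ge> \<epsilon> \<longrightarrow>
        norm ((1/2) *\<^sub>R (x + y)) \<le> 1 - \<delta>)"

end

theory Submission
  imports Defs
begin



definition sublin :: "('a::real_normed_vector \<Rightarrow> real) \<Rightarrow> bool" where
  "sublin q \<longleftrightarrow> (\<forall>x y. q (x+y) \<le> q x + q y) \<and> (\<forall>a x. a \<ge> 0 \<longrightarrow> q (a *\<^sub>R x) = a * q x)"

lemma sublin_add: "sublin q \<Longrightarrow> q (x+y) \<le> q x + q y" by (simp add: sublin_def)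
lemma sublin_scale: "sublin q \<Longrightarrow> a \<ge> 0 \<Longrightarrow> q (a *\<^sub>R x) = a * q x" by (simp add: sublin_def)
lemma sublin_zero: "sublin q \<Longrightarrow> q 0 = 0"
  using sublin_scale[of q 0 0] by simp
lemma sublin_neg: "sublin q \<Longrightarrow> - q (-x) \<le> q x"
  using sublin_add[of q x "-x"] sublin_zero[of q] by simp

lemma sublin_norm: "sublin norm"
  unfolding sublin_def by (auto simp: norm_triangle_ineq)

definition shiftq :: "('a::real_normed_vector \<Rightarrow> real) \<Rightarrow> 'a \<Rightarrow> 'a \<Rightarrow> real" where
  "shiftq q z x = (INF t\<in>{0..}. q (x + t *\<^sub>R z) - t * q z)"

lemma shiftq_lb: assumes "sublin q" "t \<ge> 0" shows "- q (-x) \<le> q (x + t *\<^sub>R z) - t * q z"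
proof -
  have "q (t *\<^sub>R z) \<le> q (x + t *\<^sub>R z) + q (-x)"
    using sublin_add[OF assms(1), of "x + t *\<^sub>R z" "-x"] by simp
  thus ?thesis using sublin_scale[OF assms] by simp
qed

lemma shiftq_bdd: assumes "sublin q" shows "bdd_below ((\<lambda>t. q (x + t *\<^sub>R z) - t * q z) ` {0..})"
  using shiftq_lb[OF assms] by (intro bdd_belowI2[where m="- q (-x)"]) auto

lemma shiftq_le: assumes "sublin q" "t \<ge> 0" shows "shiftq q z x \<le> q (x + t *\<^sub>R z) - t * q z"
  unfolding shiftq_def using assms by (intro cINF_lower shiftq_bdd) auto

lemma shiftq_ge: assumes "sublin q" "\<And>t. t \<ge> 0 \<Longrightarrow> m \<le> q (x + t *\<^sub>R z) - t * q z"
  shows "m \<le> shiftq q z x"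
  unfolding shiftq_def using assms by (intro cINF_greatest) auto

lemma shiftq_below: "sublin q \<Longrightarrow> shiftq q z x \<le> q x"
  using shiftq_le[of q 0 z x] by simp

lemma shiftq_at: "sublin q \<Longrightarrow> shiftq q z (-z) \<le> - q z"
  using shiftq_le[of q 1 z "-z"] sublin_zero[of q] by simp

lemma shiftq_sublin: assumes q: "sublin q" shows "sublin (shiftq q z)"
  unfolding sublin_def
proof (intro conjI allI impI)
  fix x y
  have "shiftq q z (x+y) - (q (y + t *\<^sub>R z) - t * q z) \<le> shiftq q z x" if t: "t \<ge> 0" for t
  proof (rule shiftq_ge[OF q])
    fix s :: real assume s: "s \<ge> 0"
    have "shiftq q z (x+y) \<le> q ((x+y) + (s+t) *\<^sub>R z) - (s+t) * q z"
      using shiftq_le[OF q, of "s+t"] s t by simp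
    also have "q ((x+y) + (s+t) *\<^sub>R z) \<le> q (x + s *\<^sub>R z) + q (y + t *\<^sub>R z)"
      using sublin_add[OF q, of "x + s *\<^sub>R z" "y + t *\<^sub>R z"] by (simp add: algebra_simps scaleR_add_left)
    finally show "shiftq q z (x+y) - (q (y + t *\<^sub>R z) - t * q z) \<le> q (x + s *\<^sub>R z) - s * q z"
      by (simp add: algebra_simps)
  qed
  hence "shiftq q z (x+y) - shiftq q z x \<le> shiftq q z y"
    by (intro shiftq_ge[OF q]) (auto simp: algebra_simps)
  thus "shiftq q z (x+y) \<le> shiftq q z x + shiftq q z y" by simp
next
  fix a :: real and x assume a: "a \<ge> 0"
  show "shiftq q z (a *\<^sub>R x) = a * shiftq q z x"
  proof (cases "a = 0")
    case True
    have "shiftq q z 0 = 0"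
    proof (rule antisym)
      show "shiftq q z 0 \<le> 0" using shiftq_below[OF q, of z 0] sublin_zero[OF q] by simp
      show "0 \<le> shiftq q z 0" by (rule shiftq_ge[OF q]) (simp add: sublin_scale[OF q])
    qed
    thus ?thesis using True by simp
  next
    case False
    hence a: "a > 0" using a by simp
    have eq: "q (a *\<^sub>R x + (a * s) *\<^sub>R z) - (a * s) * q z = a * (q (x + s *\<^sub>R z) - s * q z)" for s
      using sublin_scale[OF q, of a "x + s *\<^sub>R z"] a by (simp add: scaleR_add_right algebra_simps)
    show ?thesis
    proof (rule antisym)
      have "shiftq q z (a *\<^sub>R x) / a \<le> shiftq q z x"
      proof (rule shiftq_ge[OF q])
        fix s :: real assume "s \<ge> 0"
        hence "shiftq q z (a *\<^sub>R x) \<le> a * (q (x + s *\<^sub>R z) - s * q z)"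
          using shiftq_le[OF q, of "a * s" z "a *\<^sub>R x"] eq[of s] a by simp
        thus "shiftq q z (a *\<^sub>R x) / a \<le> q (x + s *\<^sub>R z) - s * q z"
          using a by (simp add: divide_le_eq mult.commute)
      qed
      thus "shiftq q z (a *\<^sub>R x) \<le> a * shiftq q z x" using a by (simp add: divide_le_eq mult.commute)
    next
      show "a * shiftq q z x \<le> shiftq q z (a *\<^sub>R x)"
      proof (rule shiftq_ge[OF q])
        fix t :: real assume t: "t \<ge> 0"
        have "shiftq q z x \<le> q (x + (t/a) *\<^sub>R z) - (t/a) * q z"
          using shiftq_le[OF q, of "t/a"] t a by simp
        hence "a * shiftq q z x \<le> a * (q (x + (t/a) *\<^sub>R z) - (t/a) * q z)"
          using a by simp
        also have "\<dots> = q (a *\<^sub>R x + t *\<^sub>R z) - t * q z"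
          using eq[of "t/a"] a by simp
        finally show "a * shiftq q z x \<le> q (a *\<^sub>R x + t *\<^sub>R z) - t * q z" .
      qed
    qed
  qed
qed


lemma minimal_sublin_linear:
  assumes q: "sublin q" and mn: "\<And>q'. sublin q' \<Longrightarrow> (\<And>x. q' x \<le> q x) \<Longrightarrow> q' = q"
  shows "linear q"
proof -
  have neg: "q (-z) = - q z" for z
  proof -
    have "shiftq q z = q" using mn[OF shiftq_sublin[OF q]] shiftq_below[OF q] by blast
    hence "q (-z) \<le> - q z" using shiftq_at[OF q, of z] by simp
    thus ?thesis using sublin_neg[OF q, of z] by simp
  qed
  have add: "q (x+y) = q x + q y" for x y
  proof -
    have "q (-(x+y)) \<le> q (-x) + q (-y)" using sublin_add[OF q, of "-x" "-y"] by (simp add: algebra_simps)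
    hence "- q (x+y) \<le> - q x - q y" using neg[of "x+y"] neg[of x] neg[of y] by simp
    thus ?thesis using sublin_add[OF q, of x y] by simp
  qed
  have sc: "q (r *\<^sub>R x) = r * q x" for r x
  proof (cases "r \<ge> 0")
    case True thus ?thesis using sublin_scale[OF q] by simp
  next
    case False
    have "q (r *\<^sub>R x) = - q ((-r) *\<^sub>R x)" using neg[of "(-r) *\<^sub>R x"] by simp
    thus ?thesis using sublin_scale[OF q, of "-r" x] False by simp
  qed
  show ?thesis by (rule linearI) (simp_all add: add sc)
qed

lemma exists_minimal_sublin:
  assumes p: "sublin (p::'a::real_normed_vector \<Rightarrow> real)"
  shows "\<exists>m. sublin m \<and> (\<forall>x. m x \<le> p x) \<and>
     (\<forall>q'. sublin q' \<and> (\<forall>x. q' x \<le> m x) \<longrightarrow> q' = m)"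
proof -
  define A where "A = {q. sublin q \<and> (\<forall>x. q x \<le> p x)}"
  define P where "P = (\<lambda>q1 q2::'a\<Rightarrow>real. \<forall>x. q2 x \<le> q1 x)"
  have po: "partial_order_on A (relation_of P A)"
    unfolding P_def apply (rule partial_order_on_relation_ofI) apply (auto intro: order_trans)
    apply (rule ext, rule antisym) apply auto done
  have ch: "\<exists>u\<in>A. \<forall>a\<in>C. P a u" if C: "C \<in> Chains (relation_of P A)" for C
  proof (cases "C = {}")
    case True
    thus ?thesis using p unfolding A_def by auto
  next
    case False
    have CA: "C \<subseteq> A" using C unfolding Chains_def relation_of_def by auto
    have tot: "\<forall>a\<in>C. \<forall>b\<in>C. P a b \<or> P b a" using C unfolding Chains_def relation_of_def by auto
    have sl: "\<And>a. a \<in> C \<Longrightarrow> sublin a" using CA unfolding A_def by auto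
    have bdd: "bdd_below ((\<lambda>a. a x) ` C)" for x
    proof (rule bdd_belowI2[where m="- p (-x)"])
      fix a assume a: "a \<in> C"
      hence "a (-x) \<le> p (-x)" using CA unfolding A_def by auto
      thus "- p (-x) \<le> a x" using sublin_neg[OF sl[OF a], of x] by linarith
    qed
    define u where "u x = (INF a\<in>C. a x)" for x
    have ule: "u x \<le> a x" if "a \<in> C" for a x unfolding u_def by (rule cINF_lower[OF bdd that])
    have uge: "m \<le> u x" if "\<And>a. a \<in> C \<Longrightarrow> m \<le> a x" for m x
      unfolding u_def using False that by (intro cINF_greatest) auto
    have "sublin u"
      unfolding sublin_def
    proof (intro conjI allI impI)
      fix x y
      show "u (x+y) \<le> u x + u y"
      proof (rule ccontr)
        assume nt: "\<not> ?thesis"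
        define e where "e = (u (x+y) - u x - u y) / 4"
        have e: "e > 0" "u x + u y + 2*e < u (x+y)" using nt unfolding e_def by (auto simp: field_simps)
        obtain a1 where a1: "a1 \<in> C" "a1 x < u x + e"
          using uge[of "u x + e" x] e by force
        obtain a2 where a2: "a2 \<in> C" "a2 y < u y + e"
          using uge[of "u y + e" y] e by force
        show False
        proof (cases "P a1 a2")
          case True
          hence "a2 (x+y) \<le> a2 x + a2 y" "a2 x \<le> a1 x" using sublin_add[OF sl[OF a2(1)]] P_def by auto
          thus False using ule[OF a2(1), of "x+y"] a1 a2 e by linarith
        next
          case False
          hence "P a2 a1" using tot a1 a2 by blast
          hence "a1 (x+y) \<le> a1 x + a1 y" "a1 y \<le> a2 y" using sublin_add[OF sl[OF a1(1)]] P_def by auto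
          thus False using ule[OF a1(1), of "x+y"] a1 a2 e by linarith
        qed
      qed
    next
      fix r :: real and x assume r: "r \<ge> 0"
      show "u (r *\<^sub>R x) = r * u x"
      proof (cases "r = 0")
        case True
        obtain a0 where a0: "a0 \<in> C" using \<open>C \<noteq> {}\<close> by blast
        have "u 0 \<le> 0" using ule[OF a0, of 0] sublin_zero[OF sl[OF a0]] by simp
        moreover have "0 \<le> u 0" by (rule uge) (simp add: sublin_zero[OF sl])
        ultimately have "u 0 = 0" by simp
        thus ?thesis using True by simp
      next
        case False
        hence r: "r > 0" using r by simp
        show ?thesis
        proof (rule antisym)
          have "u (r *\<^sub>R x) / r \<le> u x"
            by (rule uge) (use ule sublin_scale[OF sl] r in \<open>simp add: divide_le_eq mult.commute\<close>)
          thus "u (r *\<^sub>R x) \<le> r * u x" using r by (simp add: divide_le_eq mult.commute)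
          show "r * u x \<le> u (r *\<^sub>R x)"
          proof (rule uge)
            fix a assume a: "a \<in> C"
            show "r * u x \<le> a (r *\<^sub>R x)"
              using ule[OF a, of x] sublin_scale[OF sl[OF a], of r x] r by simp
          qed
        qed
      qed
    qed
    moreover have "\<forall>x. u x \<le> p x"
    proof
      fix x
      obtain a0 where a0: "a0 \<in> C" using False by blast
      hence "a0 x \<le> p x" using CA unfolding A_def by auto
      thus "u x \<le> p x" using ule[OF a0, of x] by simp
    qed
    ultimately show ?thesis using ule unfolding A_def P_def by auto
  qed
  obtain m where m: "m \<in> A" "\<forall>a\<in>A. P m a \<longrightarrow> a = m"
    using predicate_Zorn[OF po ch] by blast
  show ?thesis
  proof (intro exI conjI allI impI)
    show "sublin m" "\<And>x. m x \<le> p x" using m(1) unfolding A_def by auto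
    fix q' assume q': "sublin q' \<and> (\<forall>x. q' x \<le> m x)"
    have "q' x \<le> p x" for x using q' \<open>\<And>x. m x \<le> p x\<close>[of x] by (meson order_trans)
    hence "q' \<in> A" using q' unfolding A_def by simp
    moreover have "P m q'" using q' unfolding P_def by simp
    ultimately show "q' = m" using m(2) by blast
  qed
qed

lemma hahn_banach_norming:
  fixes w :: "'a::real_normed_vector"
  shows "\<exists>f. linear f \<and> (\<forall>x. \<bar>f x\<bar> \<le> norm x) \<and> f w = norm w"
proof -
  let ?p = "shiftq norm w"
  obtain m where m: "sublin m" "\<forall>x. m x \<le> ?p x" "\<forall>q'. sublin q' \<and> (\<forall>x. q' x \<le> m x) \<longrightarrow> q' = m"
    using exists_minimal_sublin[OF shiftq_sublin[OF sublin_norm]] by blast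
  have lin: "linear m" using minimal_sublin_linear[OF m(1)] m(3) by blast
  have le: "m x \<le> norm x" for x using m(2) shiftq_below[OF sublin_norm] order_trans by blast
  have "m (-w) \<le> - norm w" using m(2) shiftq_at[OF sublin_norm, of w] order_trans by blast
  moreover have "m (-w) = - m w" using linear_neg[OF lin] by simp
  ultimately have "m w = norm w" using le[of w] by simp
  moreover have "\<bar>m x\<bar> \<le> norm x" for x using le[of x] le[of "-x"] linear_neg[OF lin, of x] by simp
  ultimately show ?thesis using lin by blast
qed



lemma functional_onorm_le1:
  assumes "linear (f::'a::real_normed_vector \<Rightarrow> real)" "\<And>x. \<bar>f x\<bar> \<le> norm x"
  shows "bounded_linear f" "onorm f \<le> 1"
proof -
  show bl: "bounded_linear f"
    using assms by (intro bounded_linear_intro[where K=1]) (auto simp: linear_add linear_scale)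
  show "onorm f \<le> 1" by (rule onorm_bound) (use assms in auto)
qed

lemma uc_from_P:
  assumes P: "\<forall>\<epsilon>>0. \<exists>\<eta>>0. \<forall>g x. bounded_linear (g::'a::real_normed_vector \<Rightarrow> real) \<and> onorm g = 1 \<and>
       norm x = 1 \<and> g x > 1 - \<eta> \<longrightarrow> (\<exists>z. norm z = 1 \<and> g z = 1 \<and> norm (z - x) < \<epsilon>)"
  shows "uniformly_convex TYPE('a)"
  unfolding uniformly_convex_def
proof (intro allI impI)
  fix \<epsilon> :: real assume e: "\<epsilon> > 0"
  obtain \<eta>0 where \<eta>0: "\<eta>0 > 0" and H: "\<And>g x. bounded_linear (g::'a \<Rightarrow> real) \<Longrightarrow> onorm g = 1 \<Longrightarrow>
       norm x = 1 \<Longrightarrow> g x > 1 - \<eta>0 \<Longrightarrow> (\<exists>z. norm z = 1 \<and> g z = 1 \<and> norm (z - x) < \<epsilon>/2)"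
    using P[rule_format, of "\<epsilon>/2"] e by auto
  define \<eta> where "\<eta> = min \<eta>0 (1/2)"
  have \<eta>: "\<eta> > 0" "\<eta> \<le> \<eta>0" "\<eta> \<le> 1/2" using \<eta>0 unfolding \<eta>_def by auto
  define t where "t = \<eta>/4"
  define \<delta> where "\<delta> = min (\<eta> * \<epsilon> / 32) (\<eta>/8)"
  have t: "t > 0" using \<eta> unfolding t_def by auto
  have d: "\<delta> > 0" "\<delta> \<le> \<eta> * \<epsilon> / 32" "\<delta> \<le> \<eta>/8" using \<eta> e unfolding \<delta>_def by auto
  show "\<exists>\<delta>>0. \<forall>x y::'a. norm x = 1 \<and> norm y = 1 \<and> \<epsilon> \<le> norm (x - y) \<longrightarrow>
        norm ((1/2) *\<^sub>R (x + y)) \<le> 1 - \<delta>"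
  proof (intro exI[of _ \<delta>] conjI allI impI)
    show "\<delta> > 0" by fact
    fix x y :: 'a assume xy: "norm x = 1 \<and> norm y = 1 \<and> \<epsilon> \<le> norm (x - y)"
    show "norm ((1/2) *\<^sub>R (x + y)) \<le> 1 - \<delta>"
    proof (rule ccontr)
      assume "\<not> ?thesis"
      hence big: "norm (x + y) > 2 - 2*\<delta>" by simp
      obtain f where f: "linear f" "\<And>v. \<bar>f v\<bar> \<le> norm v" "f (x+y) = norm (x+y)"
        using hahn_banach_norming[of "x+y"] by blast
      obtain h where h: "linear h" "\<And>v. \<bar>h v\<bar> \<le> norm v" "h (y - x) = norm (y - x)"
        using hahn_banach_norming[of "y-x"] by blast
      have fx: "f x > 1 - 2*\<delta>" and fy: "f y > 1 - 2*\<delta>"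
        using f(2)[of x] f(2)[of y] f(3) big xy linear_add[OF f(1), of x y] by auto
      have hxy: "h x \<le> h y - \<epsilon>"
        using h(3) linear_diff[OF h(1), of y x] xy by (simp add: norm_minus_commute)
      define G where "G v = f v + t * h v" for v
      have Glin: "linear G" unfolding G_def using f(1) h(1)
        by (intro linearI) (simp_all add: linear_add linear_scale algebra_simps)
      have Gb: "\<bar>G v\<bar> \<le> (1+t) * norm v" for v
      proof -
        have "\<bar>t * h v\<bar> \<le> t * norm v" using h(2)[of v] t by (simp add: abs_mult mult_left_mono)
        thus ?thesis using f(2)[of v] unfolding G_def by (simp add: algebra_simps)
      qed
      have Gbl: "bounded_linear G"
        using Glin Gb by (intro bounded_linear_intro[where K="1+t"]) (auto simp: linear_add linear_scale mult.commute)
      define N where "N = onorm G"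
      have N1: "N \<le> 1 + t" unfolding N_def by (rule onorm_bound) (use Gb t in auto)
      have "\<bar>G y\<bar> \<le> N" using onorm[OF Gbl, of y] xy unfolding N_def by simp
      hence N2: "N \<ge> f y + t * h y" unfolding G_def by simp
      have hy: "h y \<ge> -1" using h(2)[of y] xy by simp
      have "t * h y \<ge> - t" using mult_left_mono[OF hy, of t] t by simp
      hence N3: "N > 1 - 2*\<delta> - t" using N2 fy by linarith
      have Npos: "N > 0" using N3 d t \<eta> unfolding t_def by linarith
      define g where "g v = G v / N" for v
      have gbl: "bounded_linear g" unfolding g_def using bounded_linear_compose[OF bounded_linear_divide[of N] Gbl] by simp
      have "onorm g = onorm (\<lambda>v. (1/N) *\<^sub>R G v)" unfolding g_def by simp
      also have "\<dots> = \<bar>1/N\<bar> * onorm G" by (rule onorm_scaleR[OF Gbl])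
      finally have g1: "onorm g = 1" using Npos unfolding N_def by simp
      have hx: "h x \<ge> -1" using h(2)[of x] xy by simp
      have "t * h x \<ge> - t" using mult_left_mono[OF hx, of t] t by simp
      hence Gx: "G x \<ge> 1 - 2*\<delta> - t" using fx unfolding G_def by linarith
      have Gxpos: "1 - 2*\<delta> - t > 0" using d t \<eta> unfolding t_def by linarith
      have "g x \<ge> (1 - 2*\<delta> - t) / (1 + t)"
      proof -
        have "(1 - 2*\<delta> - t) / (1 + t) \<le> (1 - 2*\<delta> - t) / N"
          using N1 Npos Gxpos by (intro divide_left_mono) auto
        also have "\<dots> \<le> G x / N" using Gx Npos by (intro divide_right_mono) auto
        finally show ?thesis unfolding g_def .
      qed
      moreover have "(1 - 2*\<delta> - t) / (1 + t) > 1 - \<eta>"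
      proof -
        have e1: "(1 - \<eta>) * (1 + t) = 1 - 3*\<eta>/4 - \<eta>*\<eta>/4" unfolding t_def by (simp add: field_simps)
        have "\<eta>*\<eta> \<ge> 0" by simp
        hence "(1 - \<eta>) * (1 + t) < 1 - 2*\<delta> - t" using e1 d \<eta> unfolding t_def by linarith
        thus ?thesis using t by (simp add: less_divide_eq)
      qed
      ultimately have "g x > 1 - \<eta>0" using \<eta> by linarith
      then obtain z where z: "norm z = 1" "g z = 1" "norm (z - x) < \<epsilon>/2"
        using H[OF gbl g1] xy by blast
      have Gz: "G z = N" using z(2) Npos unfolding g_def by simp
      have "h z - h x \<le> norm (z - x)" using h(2)[of "z-x"] linear_diff[OF h(1), of z x] by simp
      hence hz: "h z < h y - \<epsilon>/2" using z(3) hxy by linarith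
      have fz: "f z \<le> 1" using f(2)[of z] z(1) by simp
      have "G z < 1 + t * h y - t * \<epsilon>/2"
      proof -
        have "t * h z < t * (h y - \<epsilon>/2)" using hz t by simp
        thus ?thesis using fz unfolding G_def by (simp add: algebra_simps)
      qed
      moreover have "t * \<epsilon> / 2 \<ge> 2 * \<delta>" using d unfolding t_def by simp
      ultimately show False using Gz N2 fy by linarith
    qed
  qed
qed




lemma P_from_real:
  fixes y0 :: "'b::real_normed_vector"
  assumes y0: "y0 \<noteq> 0" and S: "uniform_sBPBp (real_operators :: ('a::real_normed_vector \<Rightarrow> 'b) set)"
  shows "\<forall>\<epsilon>>0. \<exists>\<eta>>0. \<forall>g x. bounded_linear (g::'a \<Rightarrow> real) \<and> onorm g = 1 \<and>
       norm x = 1 \<and> g x > 1 - \<eta> \<longrightarrow> (\<exists>z. norm z = 1 \<and> g z = 1 \<and> norm (z - x) < \<epsilon>)"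
proof (intro allI impI)
  fix \<epsilon> :: real assume e: "\<epsilon> > 0"
  have pos: "min \<epsilon> (1/2) > 0" using e by simp
  obtain \<eta>0 where \<eta>0: "\<eta>0 > 0" and H: "\<forall>T\<in>(real_operators :: ('a \<Rightarrow> 'b) set). \<forall>x0.
        onorm T = 1 \<and> norm x0 = 1 \<and> norm (T x0) > 1 - \<eta>0 \<longrightarrow>
        (\<exists>x1. norm x1 = 1 \<and> norm (T x1) = 1 \<and> norm (x1 - x0) < min \<epsilon> (1/2))"
    using S[unfolded uniform_sBPBp_def, rule_format, OF pos] by blast
  define u where "u = (1 / norm y0) *\<^sub>R y0"
  have u: "norm u = 1" using y0 unfolding u_def by simp
  show "\<exists>\<eta>>0. \<forall>g x. bounded_linear (g::'a \<Rightarrow> real) \<and> onorm g = 1 \<and>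
       norm x = 1 \<and> g x > 1 - \<eta> \<longrightarrow> (\<exists>z. norm z = 1 \<and> g z = 1 \<and> norm (z - x) < \<epsilon>)"
  proof (intro exI[of _ "min \<eta>0 (1/2)"] conjI allI impI)
    show "min \<eta>0 (1/2) > 0" using \<eta>0 by simp
    fix g :: "'a \<Rightarrow> real" and x assume gx: "bounded_linear g \<and> onorm g = 1 \<and> norm x = 1 \<and> g x > 1 - min \<eta>0 (1/2)"
    define T where "T v = g v *\<^sub>R u" for v
    have TL: "T \<in> real_operators" unfolding T_def real_operators_def
      using gx bounded_linear_scaleR_const[of g u] by simp
    have To: "onorm T = 1" unfolding T_def using onorm_scaleR_left[of g u] gx u by simp
    have Tx: "norm (T x) > 1 - \<eta>0" using gx u unfolding T_def by auto
    obtain x1 where x1: "norm x1 = 1" "norm (T x1) = 1" "norm (x1 - x) < min \<epsilon> (1/2)"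
      using H TL To Tx gx by blast
    have ax: "\<bar>g x1\<bar> = 1" using x1(2) u unfolding T_def by simp
    have "\<bar>g (x1 - x)\<bar> \<le> norm (x1 - x)" using onorm[of g "x1 - x"] gx by simp
    moreover have "g (x1 - x) = g x1 - g x" using gx by (simp add: linear_simps)
    ultimately have "g x1 \<ge> g x - norm (x1 - x)" by linarith
    moreover have "min \<eta>0 (1/2) \<le> 1/2" "min \<epsilon> (1/2) \<le> 1/2" "1 - min \<eta>0 (1/2) < g x" using gx by auto
    ultimately have "g x1 > 0" using x1(3) by linarith
    hence "g x1 = 1" using ax by simp
    thus "\<exists>z. norm z = 1 \<and> g z = 1 \<and> norm (z - x) < \<epsilon>" using x1 by auto
  qed
qed

lemma cs_facts:
  assumes "complex_structure J"
  shows "linear J" "\<And>x. J (J x) = - x" "\<And>a b x. norm (a *\<^sub>R x + b *\<^sub>R J x) = sqrt (a\<^sup>2 + b\<^sup>2) * norm x"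
  using assms unfolding complex_structure_def by auto

lemma P_from_complex:
  fixes y0 :: "'b::real_normed_vector" and JX :: "'a::real_normed_vector \<Rightarrow> 'a" and JY :: "'b \<Rightarrow> 'b"
  assumes y0: "y0 \<noteq> 0" and cX: "complex_structure JX" and cY: "complex_structure JY"
    and S: "uniform_sBPBp (complex_operators JX JY)"
  shows "\<forall>\<epsilon>>0. \<exists>\<eta>>0. \<forall>g x. bounded_linear (g::'a \<Rightarrow> real) \<and> onorm g = 1 \<and>
       norm x = 1 \<and> g x > 1 - \<eta> \<longrightarrow> (\<exists>z. norm z = 1 \<and> g z = 1 \<and> norm (z - x) < \<epsilon>)"
proof (intro allI impI)
  fix \<epsilon> :: real assume e: "\<epsilon> > 0"
  define \<epsilon>1 where "\<epsilon>1 = min (\<epsilon>/2) ((\<epsilon>/4)\<^sup>2)"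
  have pos: "\<epsilon>1 > 0" using e unfolding \<epsilon>1_def by simp
  have e1a: "\<epsilon>1 \<le> \<epsilon>/2" unfolding \<epsilon>1_def by simp
  have "sqrt \<epsilon>1 \<le> sqrt ((\<epsilon>/4)\<^sup>2)" unfolding \<epsilon>1_def by (intro real_sqrt_le_mono) simp
  hence e1b: "sqrt \<epsilon>1 \<le> \<epsilon>/4" using e by simp
  obtain \<eta>0 where \<eta>0: "\<eta>0 > 0" and H: "\<forall>T\<in>complex_operators JX JY. \<forall>x0.
        onorm T = 1 \<and> norm x0 = 1 \<and> norm (T x0) > 1 - \<eta>0 \<longrightarrow>
        (\<exists>x1. norm x1 = 1 \<and> norm (T x1) = 1 \<and> norm (x1 - x0) < \<epsilon>1)"
    using S[unfolded uniform_sBPBp_def, rule_format, OF pos] by blast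
  define u where "u = (1 / norm y0) *\<^sub>R y0"
  have u: "norm u = 1" using y0 unfolding u_def by simp
  note X = cs_facts[OF cX] and Y = cs_facts[OF cY]
  show "\<exists>\<eta>>0. \<forall>g x. bounded_linear (g::'a \<Rightarrow> real) \<and> onorm g = 1 \<and>
       norm x = 1 \<and> g x > 1 - \<eta> \<longrightarrow> (\<exists>z. norm z = 1 \<and> g z = 1 \<and> norm (z - x) < \<epsilon>)"
  proof (intro exI[of _ "min \<eta>0 \<epsilon>1"] conjI allI impI)
    show "min \<eta>0 \<epsilon>1 > 0" using \<eta>0 pos by simp
    fix g :: "'a \<Rightarrow> real" and x assume gx: "bounded_linear g \<and> onorm g = 1 \<and> norm x = 1 \<and> g x > 1 - min \<eta>0 \<epsilon>1"
    have gbl: "bounded_linear g" and g1: "onorm g = 1" and nx: "norm x = 1" and gxv: "g x > 1 - min \<eta>0 \<epsilon>1"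
      using gx by auto
    have glin: "linear g" using gbl bounded_linear.linear by blast
    have gle: "\<bar>g v\<bar> \<le> norm v" for v using onorm[OF gbl, of v] g1 by simp
    define T where "T v = g v *\<^sub>R u + (- g (JX v)) *\<^sub>R JY u" for v
    have nT: "norm (T v) = sqrt ((g v)\<^sup>2 + (g (JX v))\<^sup>2)" for v
      unfolding T_def using Y(3)[where a="g v" and b="- g (JX v)" and x=u] u by simp
    have Tle: "norm (T v) \<le> norm v" for v
    proof -
      define a where "a = g v"
      define b where "b = g (JX v)"
      define s where "s = sqrt (a\<^sup>2 + b\<^sup>2)"
      have s0: "s \<ge> 0" unfolding s_def by simp
      have "g (a *\<^sub>R v + b *\<^sub>R JX v) = a * a + b * b"
        using glin unfolding a_def b_def by (simp add: linear_add linear_scale)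
      also have "\<dots> = s * s" unfolding s_def by (simp add: power2_eq_square)
      finally have "s * s \<le> s * norm v"
        using gle[of "a *\<^sub>R v + b *\<^sub>R JX v"] X(3)[where a=a and x=v and b=b] unfolding s_def by simp
      hence "s \<le> norm v" using s0
        by (metis mult_le_cancel_left_pos le_less norm_ge_zero order_trans)
      thus ?thesis using nT unfolding s_def a_def b_def by simp
    qed
    have Tlin: "linear T"
      unfolding T_def using glin X(1)
      by (intro linearI) (simp_all add: linear_add linear_scale algebra_simps scaleR_add_left)
    have Tbl: "bounded_linear T"
      using Tlin Tle by (intro bounded_linear_intro[where K=1]) (auto simp: linear_add linear_scale)
    have Tcomm: "T (JX v) = JY (T v)" for v
    proof -
      have "T (JX v) = g (JX v) *\<^sub>R u + g v *\<^sub>R JY u"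
        unfolding T_def using X(2)[of v] linear_neg[OF glin, of v] by simp
      moreover have "JY (T v) = g v *\<^sub>R JY u + g (JX v) *\<^sub>R u"
        unfolding T_def using Y(2)[of u] Y(1) by (simp add: linear_diff linear_scale)
      ultimately show ?thesis by simp
    qed
    have TL: "T \<in> complex_operators JX JY" unfolding complex_operators_def using Tbl Tcomm by simp
    have gT: "\<bar>g v\<bar> \<le> norm (T v)" for v using nT real_sqrt_ge_abs1 by metis
    have To: "onorm T = 1"
    proof (rule antisym)
      show "onorm T \<le> 1" by (rule onorm_bound) (use Tle in auto)
      have "onorm g \<le> onorm T"
      proof (rule onorm_bound)
        show "0 \<le> onorm T" by (rule onorm_pos_le[OF Tbl])
        fix v
        have "norm (g v) \<le> norm (T v)" using gT[of v] by simp
        also have "\<dots> \<le> onorm T * norm v" by (rule onorm[OF Tbl])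
        finally show "norm (g v) \<le> onorm T * norm v" .
      qed
      thus "1 \<le> onorm T" using g1 by simp
    qed
    have Tx: "norm (T x) > 1 - \<eta>0"
    proof -
      have "min \<eta>0 \<epsilon>1 \<le> \<eta>0" by simp
      thus ?thesis using gT[of x] gxv by linarith
    qed
    obtain x1 where x1: "norm x1 = 1" "norm (T x1) = 1" "norm (x1 - x) < \<epsilon>1"
      using H TL To Tx nx by blast
    define a where "a = g x1"
    define b where "b = g (JX x1)"
    have ab: "a\<^sup>2 + b\<^sup>2 = 1" using x1(2) nT[of x1] unfolding a_def b_def by simp
    define z where "z = a *\<^sub>R x1 + b *\<^sub>R JX x1"
    have nz: "norm z = 1" unfolding z_def using X(3)[where a=a and x=x1 and b=b] ab x1(1) by simp
    have gz: "g z = 1" unfolding z_def using glin ab unfolding a_def b_def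
      by (simp add: linear_add linear_scale power2_eq_square)
    have "\<bar>g (x1 - x)\<bar> \<le> norm (x1 - x)" by (rule gle)
    moreover have "g (x1 - x) = a - g x" unfolding a_def using glin by (simp add: linear_diff)
    moreover have "min \<eta>0 \<epsilon>1 \<le> \<epsilon>1" by simp
    ultimately have alow: "a > 1 - 2 * \<epsilon>1" using gxv x1(3) by linarith
    have "z - x1 = (a - 1) *\<^sub>R x1 + b *\<^sub>R JX x1" unfolding z_def by (simp add: algebra_simps)
    hence "norm (z - x1) = sqrt ((a - 1)\<^sup>2 + b\<^sup>2)" using X(3)[where a="a-1" and x=x1 and b=b] x1(1) by simp
    also have "(a - 1)\<^sup>2 + b\<^sup>2 = 2 - 2 * a" using ab by (simp add: power2_eq_square algebra_simps)
    finally have nz1: "norm (z - x1) = sqrt (2 - 2*a)" .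
    have "sqrt (2 - 2*a) < sqrt (4 * \<epsilon>1)" using alow by (intro real_sqrt_less_mono) simp
    also have "sqrt (4 * \<epsilon>1) = 2 * sqrt \<epsilon>1" by (simp add: real_sqrt_mult)
    finally have "norm (z - x1) < \<epsilon>/2" using nz1 e1b by linarith
    moreover have "norm (z - x) \<le> norm (z - x1) + norm (x1 - x)"
      using norm_triangle_ineq[of "z - x1" "x1 - x"] by simp
    ultimately have "norm (z - x) < \<epsilon>" using x1(3) e1a by linarith
    thus "\<exists>z. norm z = 1 \<and> g z = 1 \<and> norm (z - x) < \<epsilon>" using nz gz by blast
  qed
qed

theorem mainTheorem7:
  fixes JX :: "'a::banach \<Rightarrow> 'a" and JY :: "'b::banach \<Rightarrow> 'b"
  assumes Y_nontrivial: "\<exists>y::'b. y \<noteq> 0"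
    and sBPBp: "uniform_sBPBp (real_operators :: ('a \<Rightarrow> 'b) set)
               \<or> (complex_structure JX \<and> complex_structure JY \<and>
                  uniform_sBPBp (complex_operators JX JY))"
  shows "uniformly_convex TYPE('a)"
proof -
  obtain y0 :: 'b where y0: "y0 \<noteq> 0" using Y_nontrivial by blast
  show ?thesis
  proof (rule uc_from_P)
    show "\<forall>\<epsilon>>0. \<exists>\<eta>>0. \<forall>g x. bounded_linear (g::'a \<Rightarrow> real) \<and> onorm g = 1 \<and>
       norm x = 1 \<and> g x > 1 - \<eta> \<longrightarrow> (\<exists>z. norm z = 1 \<and> g z = 1 \<and> norm (z - x) < \<epsilon>)"
      using sBPBp
    proof
      assume "uniform_sBPBp (real_operators :: ('a \<Rightarrow> 'b) set)"
      thus ?thesis by (rule P_from_real[OF y0])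
    next
      assume "complex_structure JX \<and> complex_structure JY \<and> uniform_sBPBp (complex_operators JX JY)"
      thus ?thesis using P_from_complex[OF y0, of JX JY] by blast
    qed
  qed
qed

end
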